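(* Let $\mathbf{A}\in\mathbb{Z}^{r\times n}$ be a fixed matrix, let $s\ge1$, and let $\mathbf{x}\in\{-1,0,1\}^n$ be random with independent coordinates, where for each $i$, $x_i=0$ with probability $1-\frac{2c}{s}$ and $x_i=1$ or $x_i=-1$ each with probability $\frac{c}{s}$, for a sufficiently small absolute constant $c>0$. Suppose there exist $\mathbf{y}\in\mathbb{R}^r$ and $j\in[n]$ such that $|\mathrm{Frac}((\mathbf{y}^\top\mathbf{A})_j)|^2\ge\frac{1}{s}\|\mathrm{Frac}(\mathbf{y}^\top\mathbf{A})\|_2^2$. Then the mutual information satisfies $I(\mathbf{A}\mathbf{x};x_j)=\Omega\left(\frac{1}{s}\right)$.
   Context: For $x\in\mathbb{R}$, $\mathrm{Frac}(x)=x-\mathrm{int}(x)\in(-\tfrac12,\tfrac12]$, where $\mathrm{int}(x)$ is the integer closest to $x$; for a vector, $\mathrm{Frac}$ is applied coordinatewise. $I(\cdot;\cdot)$ denotes Shannon mutual information. *)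

theory Defs
  imports "HOL-Probability.Probability"
begin

text \<open>Nearest integer with ties rounded down, so that Frac x = x - nint x lies in (-1/2, 1/2].\<close>
definition nint :: "real \<Rightarrow> int" where
  "nint x = \<lceil>x - 1/2\<rceil>"

definition Frac :: "real \<Rightarrow> real" where
  "Frac x = x - real_of_int (nint x)"

text \<open>Law of one coordinate: 0 with prob. 1 - 2c/s, and +1, -1 with prob. c/s each
  (valid whenever 0 <= 2c/s <= 1).\<close>
definition coord_pmf :: "real \<Rightarrow> real \<Rightarrow> int pmf" where
  "coord_pmf c s = bind_pmf (bernoulli_pmf (2 * c / s))
     (\<lambda>b. if b then map_pmf (\<lambda>u. if u then 1 else -1) (bernoulli_pmf (1/2)) else return_pmf 0)"

text \<open>Random vector x in {-1,0,1}^n with independent coordinates (indices 0..n-1; 0 elsewhere).\<close>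
definition x_pmf :: "nat \<Rightarrow> real \<Rightarrow> real \<Rightarrow> (nat \<Rightarrow> int) pmf" where
  "x_pmf n c s = Pi_pmf {..<n} 0 (\<lambda>_. coord_pmf c s)"

definition matvec :: "nat \<Rightarrow> nat \<Rightarrow> (nat \<Rightarrow> nat \<Rightarrow> int) \<Rightarrow> (nat \<Rightarrow> int) \<Rightarrow> int list" where
  "matvec r n A x = map (\<lambda>i. \<Sum>k<n. A i k * x k) [0..<r]"

definition rowcomb :: "nat \<Rightarrow> (nat \<Rightarrow> nat \<Rightarrow> int) \<Rightarrow> (nat \<Rightarrow> real) \<Rightarrow> nat \<Rightarrow> real" where
  "rowcomb r A y k = (\<Sum>i<r. y i * real_of_int (A i k))"

end

theory Submission
  imports Defs "HOL-Analysis.Harmonic_Numbers"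
begin

lemma mi_pmf:
  fixes M :: "'a pmf" and X :: "'a \<Rightarrow> 'b::countable" and Y :: "'a \<Rightarrow> 'c::countable"
  assumes fin: "finite (set_pmf M)" and b: "1 < b"
  shows "prob_space.mutual_information (measure_pmf M) b (count_space UNIV) (count_space UNIV) X Y =
    (\<Sum>z\<in>set_pmf (map_pmf (\<lambda>x. (X x, Y x)) M).
       pmf (map_pmf (\<lambda>x. (X x, Y x)) M) z *
       log b (pmf (map_pmf (\<lambda>x. (X x, Y x)) M) z / (pmf (map_pmf X M) (fst z) * pmf (map_pmf Y M) (snd z))))"
proof -
  interpret information_space "measure_pmf M" b
    by standard (rule b)
  let ?Pxy = "map_pmf (\<lambda>x. (X x, Y x)) M"
  have dist: "distributed (measure_pmf M) (count_space UNIV) Z (\<lambda>x. ennreal (pmf (map_pmf Z M) x))"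
    for Z :: "'a \<Rightarrow> 'd::countable"
  proof -
    have "distr (measure_pmf M) (count_space UNIV) Z = measure_pmf (map_pmf Z M)"
      by (simp add: map_pmf_rep_eq)
    also have "\<dots> = density (count_space UNIV) (\<lambda>x. ennreal (pmf (map_pmf Z M) x))"
      by (rule measure_pmf_eq_density)
    finally show ?thesis unfolding distributed_def by auto
  qed
  have pc: "(count_space UNIV \<Otimes>\<^sub>M count_space UNIV :: ('b \<times> 'c) measure) = count_space UNIV"
    using pair_measure_countable[of "UNIV::'b set" "UNIV :: 'c set"] by simp
  have sf1: "sigma_finite_measure (count_space (UNIV::'b set))" by (rule sigma_finite_measure_count_space)
  have sf2: "sigma_finite_measure (count_space (UNIV::'c set))" by (rule sigma_finite_measure_count_space)
  note XX = mutual_information_distr[OF sf1 sf2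
      dist[of X] _ dist[of Y] _ dist[of "\<lambda>x. (X x, Y x)", folded pc]]
  have "prob_space.mutual_information (measure_pmf M) b (count_space (UNIV::'b set)) (count_space (UNIV::'c set)) X Y =
     integral\<^sup>L (count_space UNIV \<Otimes>\<^sub>M count_space UNIV)
       (\<lambda>z. pmf ?Pxy z * log b (pmf ?Pxy z / (pmf (map_pmf X M) (fst z) * pmf (map_pmf Y M) (snd z))))"
    using XX by simp
  also have "\<dots> = (\<Sum>z\<in>set_pmf ?Pxy. pmf ?Pxy z * log b (pmf ?Pxy z / (pmf (map_pmf X M) (fst z) * pmf (map_pmf Y M) (snd z))))"
    unfolding pc
    apply (subst lebesgue_integral_count_space_finite_support)
    subgoal apply (rule finite_subset[of _ "set_pmf ?Pxy"])
      apply (clarify, unfold set_pmf_iff, force)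
      using fin by simp
    apply (rule sum.mono_neutral_left)
    by (auto simp: fin) (metis set_pmf_iff set_map_pmf)
  finally show ?thesis .
qed

lemma kl_term:
  fixes p q :: real
  assumes p: "0 < p" and q: "0 < q"
  shows "(p - q) + max 0 (p/2 - q) \<le> p * ln (p / q)"
proof (cases "p/2 \<ge> q")
  case True
  have "ln (2*q/p) \<le> 2*q/p - 1" using p q by (intro ln_le_minus_one) auto
  moreover have "ln (2*q/p) = ln 2 + ln q - ln p" using p q by (simp add: ln_div ln_mult)
  moreover have "ln (p/q) = ln p - ln q" using p q by (simp add: ln_div)
  moreover have "2/3 \<le> ln (2::real)" by (rule ln2_ge_two_thirds)
  ultimately have "3/2 - 2*q/p \<le> ln (p/q)" by linarith
  hence "p * (3/2 - 2*q/p) \<le> p * ln (p/q)" using p by (intro mult_left_mono) auto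
  moreover have "p * (3/2 - 2*q/p) = (p - q) + (p/2 - q)" using p by (simp add: field_simps)
  ultimately show ?thesis using True by simp
next
  case False
  have "ln (q/p) \<le> q/p - 1" using p q by (intro ln_le_minus_one) auto
  moreover have "ln (q/p) = - ln (p/q)" using p q by (simp add: ln_div)
  ultimately have "1 - q/p \<le> ln (p/q)" by linarith
  hence "p * (1 - q/p) \<le> p * ln (p/q)" using p by (intro mult_left_mono) auto
  moreover have "p * (1 - q/p) = p - q" using p by (simp add: field_simps)
  ultimately show ?thesis using False by simp
qed

lemma mi_lower:
  fixes M :: "'a pmf" and X :: "'a \<Rightarrow> 'b::countable" and Y :: "'a \<Rightarrow> 'c::countable"
  assumes fin: "finite (set_pmf M)"
  shows "measure M {x. X x \<in> E \<and> Y x = a} / 2 - measure M {x. Y x = a} * measure M {x. X x \<in> E}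
     \<le> prob_space.mutual_information (measure_pmf M) 2 (count_space UNIV) (count_space UNIV) X Y"
proof -
  define Pxy where "Pxy = map_pmf (\<lambda>x. (X x, Y x)) M"
  define PX where "PX = map_pmf X M"
  define PY where "PY = map_pmf Y M"
  define F where "F = set_pmf Pxy"
  define w where "w z = pmf Pxy z" for z
  define q where "q z = pmf PX (fst z) * pmf PY (snd z)" for z
  have finF: "finite F" unfolding F_def Pxy_def using fin by simp
  have finX: "finite (set_pmf PX)" unfolding PX_def using fin by simp
  have finY: "finite (set_pmf PY)" unfolding PY_def using fin by simp
  have FXY: "F \<subseteq> set_pmf PX \<times> set_pmf PY" unfolding F_def Pxy_def PX_def PY_def by auto
  have wpos: "z \<in> F \<Longrightarrow> 0 < w z" for z unfolding w_def F_def by (simp add: pmf_positive)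
  have qpos: "z \<in> F \<Longrightarrow> 0 < q z" for z
    using FXY unfolding q_def by (auto intro!: mult_pos_pos pmf_positive)
  have MI: "prob_space.mutual_information (measure_pmf M) 2 (count_space UNIV) (count_space UNIV) X Y
     = (\<Sum>z\<in>F. w z * log 2 (w z / q z))"
    unfolding F_def w_def q_def Pxy_def PX_def PY_def by (rule mi_pmf[OF fin]) simp
  also have "\<dots> = (\<Sum>z\<in>F. w z * ln (w z / q z)) / ln 2"
    by (simp add: log_def sum_divide_distrib)
  finally have MI2: "prob_space.mutual_information (measure_pmf M) 2 (count_space UNIV) (count_space UNIV) X Y
     = (\<Sum>z\<in>F. w z * ln (w z / q z)) / ln 2" .
  have B: "(\<Sum>z\<in>F. (w z - q z) + max 0 (w z/2 - q z)) \<le> (\<Sum>z\<in>F. w z * ln (w z / q z))"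
    by (intro sum_mono kl_term wpos qpos)
  have sw: "(\<Sum>z\<in>F. w z) = 1" unfolding w_def F_def by (rule sum_pmf_eq_1) (use finF F_def in auto)
  have "(\<Sum>z\<in>F. q z) \<le> (\<Sum>z\<in>set_pmf PX \<times> set_pmf PY. q z)"
    by (rule sum_mono2) (use finX finY FXY q_def in auto)
  also have "\<dots> = (\<Sum>u\<in>set_pmf PX. pmf PX u) * (\<Sum>v\<in>set_pmf PY. pmf PY v)"
    unfolding q_def sum_product sum.cartesian_product by (simp add: case_prod_beta)
  also have "\<dots> = 1" using finX finY by (simp add: sum_pmf_eq_1)
  finally have sq: "(\<Sum>z\<in>F. q z) \<le> 1" .
  define G where "G = F \<inter> {z. fst z \<in> E \<and> snd z = a}"
  have GF: "G \<subseteq> F" unfolding G_def by auto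
  have finG: "finite G" using finF GF by (rule finite_subset[rotated])
  have "(\<Sum>z\<in>G. w z) = measure Pxy G" unfolding w_def by (simp add: measure_measure_pmf_finite finG)
  also have "\<dots> = measure Pxy {z. fst z \<in> E \<and> snd z = a}"
    unfolding G_def F_def by (subst Int_commute, rule measure_Int_set_pmf)
  also have "\<dots> = measure M {x. X x \<in> E \<and> Y x = a}"
    unfolding Pxy_def by (simp add: vimage_def)
  finally have sGw: "(\<Sum>z\<in>G. w z) = measure M {x. X x \<in> E \<and> Y x = a}" .
  have "(\<Sum>z\<in>G. q z) \<le> (\<Sum>z\<in>(set_pmf PX \<inter> E) \<times> {a}. q z)"
    by (rule sum_mono2) (use finX FXY q_def G_def in auto)
  also have "\<dots> = (\<Sum>u\<in>set_pmf PX \<inter> E. pmf PX u) * pmf PY a"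
  proof -
    have "(set_pmf PX \<inter> E) \<times> {a} = (\<lambda>u. (u, a)) ` (set_pmf PX \<inter> E)" by auto
    then show ?thesis unfolding q_def by (simp add: sum.reindex inj_on_def sum_distrib_right)
  qed
  also have "(\<Sum>u\<in>set_pmf PX \<inter> E. pmf PX u) = measure PX E"
    using finX by (simp add: measure_measure_pmf_finite[symmetric] Int_commute measure_Int_set_pmf)
  also have "measure PX E = measure M {x. X x \<in> E}" unfolding PX_def by (simp add: vimage_def)
  also have "pmf PY a = measure M {x. Y x = a}" unfolding PY_def by (simp add: pmf_map vimage_def)
  finally have sGq: "(\<Sum>z\<in>G. q z) \<le> measure M {x. X x \<in> E} * measure M {x. Y x = a}" .
  have "(\<Sum>z\<in>G. w z/2 - q z) \<le> (\<Sum>z\<in>G. max 0 (w z/2 - q z))" by (intro sum_mono) simp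
  also have "\<dots> \<le> (\<Sum>z\<in>F. max 0 (w z/2 - q z))" by (rule sum_mono2[OF finF GF]) simp
  finally have R: "measure M {x. X x \<in> E \<and> Y x = a} / 2 - measure M {x. Y x = a} * measure M {x. X x \<in> E}
      \<le> (\<Sum>z\<in>F. max 0 (w z/2 - q z))"
    using sGw sGq by (simp add: sum_subtractf sum_divide_distrib[symmetric] mult.commute)
  have Bt: "(\<Sum>z\<in>F. (w z - q z) + max 0 (w z/2 - q z)) = (\<Sum>z\<in>F. w z) - (\<Sum>z\<in>F. q z) + (\<Sum>z\<in>F. max 0 (w z/2 - q z))"
    by (simp add: sum.distrib sum_subtractf)
  have M0: "0 \<le> (\<Sum>z\<in>F. max 0 (w z/2 - q z))" by (intro sum_nonneg) simp
  define S where "S = (\<Sum>z\<in>F. w z * ln (w z / q z))"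
  have S1: "(\<Sum>z\<in>F. max 0 (w z/2 - q z)) \<le> S" using B Bt sw sq M0 unfolding S_def by linarith
  have "S \<le> S / ln 2"
  proof -
    have "0 \<le> S" using S1 M0 by linarith
    moreover have "0 < ln (2::real)" "ln (2::real) < 1" using ln_2_less_1 by auto
    ultimately show ?thesis by (simp add: le_divide_eq mult_left_le)
  qed
  then show ?thesis using MI2 R S1 unfolding S_def by linarith
qed


lemma coord_set: "set_pmf (coord_pmf c s) \<subseteq> {-1,0,1}"
  unfolding coord_pmf_def by (auto split: if_splits)

lemma coord_pmf_val:
  assumes "0 \<le> 2*c/s" "2*c/s \<le> 1"
  shows "pmf (coord_pmf c s) v = (if v = 1 \<or> v = -1 then c/s else if v = 0 then 1 - 2*c/s else 0)"
proof -
  have m: "pmf (map_pmf (\<lambda>u. if u then 1 else -1) (bernoulli_pmf (1/2))) v =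
     (if v = 1 \<or> v = -1 then 1/2 else (0::real))" for v :: int
  proof -
    have "pmf (map_pmf (\<lambda>u. if u then 1 else -1) (bernoulli_pmf (1/2))) v =
       measure (bernoulli_pmf (1/2)) ((\<lambda>u. if u then (1::int) else -1) -` {v})" by (rule pmf_map)
    also have "(\<lambda>u. if u then (1::int) else -1) -` {v} = (if v = 1 then {True} else if v = -1 then {False} else {})"
      by (auto split: if_splits)
    finally show ?thesis by (simp add: measure_pmf_single)
  qed
  show ?thesis
    unfolding coord_pmf_def pmf_bind using assms
    by (simp add: m)
qed

lemma coord_exp:
  fixes g :: "int \<Rightarrow> real"
  assumes "0 \<le> 2*c/s" "2*c/s \<le> 1"
  shows "measure_pmf.expectation (coord_pmf c s) g = (c/s) * (g 1 + g (-1)) + (1 - 2*c/s) * g 0"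
proof -
  have "measure_pmf.expectation (coord_pmf c s) g = (\<Sum>v\<in>{-1,0,1}. g v * pmf (coord_pmf c s) v)"
    by (rule integral_measure_pmf_real) (use coord_set in auto)
  also have "\<dots> = (c/s) * (g 1 + g (-1)) + (1 - 2*c/s) * g 0"
    using assms by (simp add: coord_pmf_val algebra_simps)
  finally show ?thesis .
qed

lemma exp_pair_mult:
  fixes g :: "'a \<Rightarrow> real" and h :: "'b \<Rightarrow> real"
  assumes fA: "finite (set_pmf A)" and fB: "finite (set_pmf B)"
  shows "measure_pmf.expectation (pair_pmf A B) (\<lambda>z. g (fst z) * h (snd z)) =
         measure_pmf.expectation A g * measure_pmf.expectation B h"
proof -
  have "measure_pmf.expectation (pair_pmf A B) (\<lambda>z. g (fst z) * h (snd z)) =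
     (\<Sum>z\<in>set_pmf A \<times> set_pmf B. g (fst z) * h (snd z) * pmf (pair_pmf A B) z)"
    by (rule integral_measure_pmf_real) (use fA fB in auto)
  also have "\<dots> = (\<Sum>a\<in>set_pmf A. \<Sum>b\<in>set_pmf B. (g a * pmf A a) * (h b * pmf B b))"
  proof -
    have pp: "pmf (pair_pmf A B) z = pmf A (fst z) * pmf B (snd z)" for z by (cases z) (simp add: pmf_pair)
    show ?thesis by (simp add: sum.cartesian_product pp case_prod_beta algebra_simps)
  qed
  also have "\<dots> = (\<Sum>a\<in>set_pmf A. g a * pmf A a) * (\<Sum>b\<in>set_pmf B. h b * pmf B b)"
    by (simp add: sum_product)
  also have "(\<Sum>a\<in>set_pmf A. g a * pmf A a) = measure_pmf.expectation A g"
    by (rule integral_measure_pmf_real[symmetric]) (use fA in auto)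
  also have "(\<Sum>b\<in>set_pmf B. h b * pmf B b) = measure_pmf.expectation B h"
    by (rule integral_measure_pmf_real[symmetric]) (use fB in auto)
  finally show ?thesis .
qed

lemma fin_Pi:
  assumes "finite A" "finite (set_pmf Q)"
  shows "finite (set_pmf (Pi_pmf A d (\<lambda>_. Q)))"
  using assms by (simp add: set_Pi_pmf finite_PiE_dflt)

lemma sq_pi:
  fixes Q :: "int pmf" and th :: "nat \<Rightarrow> real"
  assumes finQ: "finite (set_pmf Q)"
    and m1: "measure_pmf.expectation Q (\<lambda>x. real_of_int x) = 0"
    and m2: "measure_pmf.expectation Q (\<lambda>x. (real_of_int x)^2) = v"
  shows "finite A \<Longrightarrow> measure_pmf.expectation (Pi_pmf A 0 (\<lambda>_. Q)) (\<lambda>f. (\<Sum>k\<in>A. th k * f k)^2)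
     = v * (\<Sum>k\<in>A. (th k)^2)"
proof (induction A rule: finite_induct)
  case empty
  then show ?case by simp
next
  case (insert a A)
  define P where "P = Pi_pmf A 0 (\<lambda>_. Q)"
  define S where "S f = (\<Sum>k\<in>A. th k * real_of_int (f k))" for f :: "nat \<Rightarrow> int"
  have finP: "finite (set_pmf P)" unfolding P_def using insert(1) finQ by (rule fin_Pi)
  have finPair: "finite (set_pmf (pair_pmf Q P))" using finP finQ by simp
  have eqS: "(\<Sum>k\<in>insert a A. th k * real_of_int ((f(a:=y)) k)) = th a * real_of_int y + S f" for f y
  proof -
    have "(\<Sum>k\<in>A. th k * real_of_int ((f(a:=y)) k)) = S f"
      unfolding S_def using insert(2) by (intro sum.cong) auto
    then show ?thesis using insert(1,2) by simp
  qed
  have "measure_pmf.expectation (Pi_pmf (insert a A) 0 (\<lambda>_. Q)) (\<lambda>f. (\<Sum>k\<in>insert a A. th k * f k)^2)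
     = measure_pmf.expectation (map_pmf (\<lambda>(y,f). f(a:=y)) (pair_pmf Q P)) (\<lambda>f. (\<Sum>k\<in>insert a A. th k * f k)^2)"
    unfolding P_def by (subst Pi_pmf_insert[OF insert(1,2)]) (rule refl)
  also have "\<dots> = measure_pmf.expectation (pair_pmf Q P) (\<lambda>z. (\<Sum>k\<in>insert a A. th k * real_of_int (((snd z)(a := fst z)) k))^2)"
    by (simp only: integral_map_pmf case_prod_beta)
  also have "\<dots> = measure_pmf.expectation (pair_pmf Q P) (\<lambda>z. (th a * real_of_int (fst z) + S (snd z))^2)"
    by (rule Bochner_Integration.integral_cong[OF refl]) (simp only: eqS)
  also have "\<dots> = measure_pmf.expectation (pair_pmf Q P) (\<lambda>z. (th a)^2 * (real_of_int (fst z))^2 + 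
       (2 * th a) * (real_of_int (fst z) * S (snd z)) + (S (snd z))^2)"
    by (simp add: power2_eq_square algebra_simps)
  also have "\<dots> = (th a)^2 * measure_pmf.expectation (pair_pmf Q P) (\<lambda>z. (real_of_int (fst z))^2)
     + (2 * th a) * measure_pmf.expectation (pair_pmf Q P) (\<lambda>z. real_of_int (fst z) * S (snd z))
     + measure_pmf.expectation (pair_pmf Q P) (\<lambda>z. (S (snd z))^2)"
    using finPair by (simp add: integrable_measure_pmf_finite)
  also have "measure_pmf.expectation (pair_pmf Q P) (\<lambda>z. real_of_int (fst z) * S (snd z)) = 0"
    using exp_pair_mult[OF finQ finP, of "\<lambda>x. real_of_int x" S] m1 by simp
  also have "measure_pmf.expectation (pair_pmf Q P) (\<lambda>z. (real_of_int (fst z))^2) = v"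
    using m2 expectation_pair_pmf_fst[of Q P "\<lambda>x. (real_of_int x)^2"] by simp
  also have "measure_pmf.expectation (pair_pmf Q P) (\<lambda>z. (S (snd z))^2) = v * (\<Sum>k\<in>A. (th k)^2)"
    using insert(3) expectation_pair_pmf_snd[of Q P "\<lambda>f. (S f)^2"] unfolding P_def S_def by simp
  finally show ?case using insert(1,2) by (simp add: algebra_simps)
qed


lemma cheb:
  fixes P :: "'a pmf" and W :: "'a \<Rightarrow> real"
  assumes fin: "finite (set_pmf P)" and t: "0 < t"
  shows "measure P {f. t \<le> \<bar>W f\<bar>} \<le> measure_pmf.expectation P (\<lambda>f. (W f)^2) / t^2"
proof -
  have "measure P {f. t \<le> \<bar>W f\<bar>} = measure_pmf.expectation P (indicator {f. t \<le> \<bar>W f\<bar>})"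
    by simp
  also have "\<dots> \<le> measure_pmf.expectation P (\<lambda>f. (W f)^2 / t^2)"
  proof (rule integral_mono)
    show "integrable (measure_pmf P) (indicator {f. t \<le> \<bar>W f\<bar>} :: 'a \<Rightarrow> real)"
      using fin by (simp add: integrable_measure_pmf_finite)
    show "integrable (measure_pmf P) (\<lambda>f. (W f)^2 / t^2)"
      using fin by (simp add: integrable_measure_pmf_finite)
    fix f
    show "indicator {f. t \<le> \<bar>W f\<bar>} f \<le> (W f)^2 / t^2"
    proof (cases "t \<le> \<bar>W f\<bar>")
      case True
      then have "t^2 \<le> (W f)^2" using t by (metis abs_of_pos power2_abs power_mono less_imp_le)
      then show ?thesis using True t by simp
    qed auto
  qed
  also have "\<dots> = measure_pmf.expectation P (\<lambda>f. (W f)^2) / t^2" by simp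
  finally show ?thesis .
qed

lemma Frac_bounds: "- 1/2 < Frac x" "Frac x \<le> 1/2"
proof -
  have "real_of_int \<lceil>x - 1/2\<rceil> - 1 < x - 1/2" "x - 1/2 \<le> real_of_int \<lceil>x - 1/2\<rceil>"
    using ceiling_correct[of "x - 1/2"] by auto
  then show "- 1/2 < Frac x" "Frac x \<le> 1/2" unfolding Frac_def nint_def by linarith+
qed

lemma matvec_lin:
  "(\<Sum>i<r. y i * real_of_int (matvec r n A x ! i)) = (\<Sum>k<n. rowcomb r A y k * real_of_int (x k))"
proof -
  have "(\<Sum>i<r. y i * real_of_int (matvec r n A x ! i)) = (\<Sum>i<r. \<Sum>k<n. y i * real_of_int (A i k) * real_of_int (x k))"
    unfolding matvec_def by (intro sum.cong) (auto simp: sum_distrib_left mult.assoc)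
  also have "\<dots> = (\<Sum>k<n. \<Sum>i<r. y i * real_of_int (A i k) * real_of_int (x k))" by (rule sum.swap)
  also have "\<dots> = (\<Sum>k<n. rowcomb r A y k * real_of_int (x k))"
    unfolding rowcomb_def by (simp add: sum_distrib_right)
  finally show ?thesis .
qed


lemma prod_meas:
  fixes M :: "'a::countable pmf" and N :: "'b pmf"
  assumes fin: "finite (set_pmf N)"
  shows "measure (pair_pmf M N) (A \<times> B) = measure M A * measure N B"
proof -
  have "measure (pair_pmf M N) (A \<times> B) = measure (pair_pmf M N) ((A \<times> B) \<inter> set_pmf (pair_pmf M N))"
    by (rule measure_Int_set_pmf[symmetric])
  also have "(A \<times> B) \<inter> set_pmf (pair_pmf M N) = (A \<times> (B \<inter> set_pmf N)) \<inter> set_pmf (pair_pmf M N)"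
    by auto
  also have "measure (pair_pmf M N) \<dots> = measure (pair_pmf M N) (A \<times> (B \<inter> set_pmf N))"
    by (rule measure_Int_set_pmf)
  also have "\<dots> = measure M A * measure N (B \<inter> set_pmf N)"
    by (rule measure_pmf_prob_product) (auto intro: countable_finite fin)
  also have "measure N (B \<inter> set_pmf N) = measure N B" by (rule measure_Int_set_pmf)
  finally show ?thesis .
qed

lemma key:
  fixes c s :: real and A :: "nat \<Rightarrow> nat \<Rightarrow> int" and y :: "nat \<Rightarrow> real" and r n j :: nat
  assumes c: "0 < c" "c \<le> 1/100" and s: "1 \<le> s" and j: "j < n"
    and nz: "Frac (rowcomb r A y j) \<noteq> 0"
    and cond: "\<bar>Frac (rowcomb r A y j)\<bar>\<^sup>2 \<ge> (1/s) * (\<Sum>k<n. (Frac (rowcomb r A y k))\<^sup>2)"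
  shows "c/4/s \<le> prob_space.mutual_information (measure_pmf (x_pmf n c s)) 2
          (count_space UNIV) (count_space UNIV) (\<lambda>x. matvec r n A x) (\<lambda>x. x j)"
proof -
  define th where "th k = Frac (rowcomb r A y k)" for k
  define t where "t = \<bar>th j\<bar>/2"
  define Q where "Q = coord_pmf c s"
  define A' where "A' = {..<n} - {j}"
  define P where "P = Pi_pmf A' 0 (\<lambda>_. Q)"
  define W where "W f = (\<Sum>k\<in>A'. th k * real_of_int (f k))" for f :: "nat \<Rightarrow> int"
  define near where "near u = (\<exists>m::int. \<bar>u - th j - real_of_int m\<bar> < t)" for u
  define E where "E = {v :: int list. near (\<Sum>i<r. y i * real_of_int (v ! i))}"
  define g where "g = (\<lambda>(b::int, f::nat\<Rightarrow>int). f(j:=b))"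
  define u where "u = c/s"
  have spos: "0 < s" using s by simp
  have p: "0 \<le> 2*c/s" "2*c/s \<le> 1" using c s by (auto simp: field_simps)
  have upos: "0 < u" and ule: "u \<le> c" unfolding u_def using c s by (auto simp: field_simps)
  have thj0: "th j \<noteq> 0" using nz unfolding th_def .
  have tpos: "0 < t" unfolding t_def using thj0 by simp
  have thle: "\<bar>th j\<bar> \<le> 1/2" unfolding th_def using Frac_bounds[of "rowcomb r A y j"] by auto
  have finQ: "finite (set_pmf Q)" unfolding Q_def by (rule finite_subset[OF coord_set]) simp
  have finA': "finite A'" unfolding A'_def by simp
  have finP: "finite (set_pmf P)" unfolding P_def by (rule fin_Pi[OF finA' finQ])
  have finM: "finite (set_pmf (x_pmf n c s))" unfolding x_pmf_def
    by (rule fin_Pi) (use finQ Q_def in auto)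
  have ins: "{..<n} = insert j A'" "j \<notin> A'" unfolding A'_def using j by auto
  have Mdec: "x_pmf n c s = map_pmf g (pair_pmf Q P)"
    unfolding x_pmf_def ins(1) P_def g_def Q_def
    by (rule Pi_pmf_insert[OF finA' ins(2)])
  have gj: "g z j = fst z" for z unfolding g_def by (simp add: case_prod_beta)
  have sumg: "(\<Sum>k<n. th k * real_of_int (g z k)) = th j * real_of_int (fst z) + W (snd z)" for z
  proof -
    have "(\<Sum>k\<in>A'. th k * real_of_int (g z k)) = W (snd z)"
      unfolding W_def g_def using ins(2) by (intro sum.cong) (auto simp: case_prod_beta)
    then show ?thesis unfolding ins(1) using finA' ins(2) gj by simp
  qed
  have nearshift: "near (v + real_of_int N) \<longleftrightarrow> near v" for v N
  proof
    assume "near (v + real_of_int N)"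
    then obtain m where "\<bar>v + real_of_int N - th j - real_of_int m\<bar> < t" unfolding near_def by blast
    then have "\<bar>v - th j - real_of_int (m - N)\<bar> < t" by (simp add: algebra_simps)
    then show "near v" unfolding near_def by blast
  next
    assume "near v"
    then obtain m where "\<bar>v - th j - real_of_int m\<bar> < t" unfolding near_def by blast
    then have "\<bar>v + real_of_int N - th j - real_of_int (m + N)\<bar> < t" by (simp add: algebra_simps)
    then show "near (v + real_of_int N)" unfolding near_def by blast
  qed
  have nearX: "matvec r n A (g z) \<in> E \<longleftrightarrow> near (th j * real_of_int (fst z) + W (snd z))" for z
  proof -
    have "(\<Sum>i<r. y i * real_of_int (matvec r n A (g z) ! i)) = (\<Sum>k<n. rowcomb r A y k * real_of_int (g z k))"
      by (rule matvec_lin)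
    also have "\<dots> = (\<Sum>k<n. th k * real_of_int (g z k)) + real_of_int (\<Sum>k<n. nint (rowcomb r A y k) * g z k)"
      unfolding th_def Frac_def by (simp add: sum.distrib[symmetric] algebra_simps)
    finally have eq: "(\<Sum>i<r. y i * real_of_int (matvec r n A (g z) ! i)) = (\<Sum>k<n. th k * real_of_int (g z k)) + real_of_int (\<Sum>k<n. nint (rowcomb r A y k) * g z k)" .
    show ?thesis unfolding E_def mem_Collect_eq eq sumg by (rule nearshift)
  qed
  have Qmeas: "measure Q S = u * (indicator S 1 + indicator S (-1)) + (1 - 2*u) * indicator S 0" for S
  proof -
    have "measure Q S = measure_pmf.expectation Q (indicator S)" by simp
    also have "\<dots> = u * (indicator S 1 + indicator S (-1)) + (1 - 2*u) * indicator S 0"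
      unfolding Q_def u_def by (subst coord_exp[OF p]) (simp add: algebra_simps)
    finally show ?thesis .
  qed
  have Q1: "measure Q {1} = u" using Qmeas[of "{1}"] by simp
  have Qnz: "measure Q {b. b \<noteq> 0} = 2*u" using Qmeas[of "{b. b \<noteq> 0}"] by simp
  have EQ1: "measure_pmf.expectation Q (\<lambda>x. real_of_int x) = 0"
    unfolding Q_def by (subst coord_exp[OF p]) simp
  have EQ2: "measure_pmf.expectation Q (\<lambda>x. (real_of_int x)^2) = 2*c/s"
    unfolding Q_def by (subst coord_exp[OF p]) simp
  define q8 where "q8 = measure P {f. t \<le> \<bar>W f\<bar>}"
  have q8: "q8 \<le> 8*c"
  proof -
    have e1: "q8 \<le> measure_pmf.expectation P (\<lambda>f. (W f)^2) / t^2"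
      unfolding q8_def by (rule cheb[OF finP tpos])
    have e2: "measure_pmf.expectation P (\<lambda>f. (W f)^2) = 2*c/s * (\<Sum>k\<in>A'. (th k)^2)"
      unfolding P_def W_def by (rule sq_pi[OF finQ EQ1 EQ2 finA'])
    have "(\<Sum>k\<in>A'. (th k)^2) \<le> (\<Sum>k<n. (th k)^2)"
      by (rule sum_mono2) (auto simp: A'_def)
    also have "(\<Sum>k<n. (th k)^2) \<le> s * (th j)^2"
      using cond spos unfolding th_def by (simp add: field_simps)
    finally have e3: "(\<Sum>k\<in>A'. (th k)^2) \<le> s * (th j)^2" .
    have "2*c/s * (\<Sum>k\<in>A'. (th k)^2) \<le> 2*c/s * (s * (th j)^2)"
      using e3 p(1) by (rule mult_left_mono)
    also have "\<dots> = 2*c*(th j)^2" using spos by simp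
    finally have e4: "measure_pmf.expectation P (\<lambda>f. (W f)^2) / t^2 \<le> 2*c*(th j)^2 / t^2"
      unfolding e2 using tpos by (intro divide_right_mono) auto
    also have "2*c*(th j)^2 / t^2 = 8*c" unfolding t_def using thj0 by (simp add: field_simps power2_eq_square)
    finally show ?thesis using e1 by linarith
  qed
  have q8nn: "0 \<le> q8" unfolding q8_def by simp
  have m1: "u * (1 - q8) \<le> measure (x_pmf n c s) {x. matvec r n A x \<in> E \<and> x j = 1}"
  proof -
    have "measure (x_pmf n c s) {x. matvec r n A x \<in> E \<and> x j = 1} =
          measure (pair_pmf Q P) {z. near (th j * real_of_int (fst z) + W (snd z)) \<and> fst z = 1}"
      unfolding Mdec by (simp add: vimage_def nearX gj)
    also have "\<dots> \<ge> measure (pair_pmf Q P) ({1} \<times> {f. \<bar>W f\<bar> < t})"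
    proof (rule measure_pmf.finite_measure_mono)
      show "{1} \<times> {f. \<bar>W f\<bar> < t} \<subseteq> {z. near (th j * real_of_int (fst z) + W (snd z)) \<and> fst z = 1}"
      proof clarify
        fix f assume "\<bar>W f\<bar> < t"
        then have "\<bar>th j * real_of_int 1 + W f - th j - real_of_int (0::int)\<bar> < t" by simp
        then show "near (th j * real_of_int (fst (1::int, f)) + W (snd (1::int, f))) \<and> fst (1::int, f) = 1"
          unfolding near_def by (auto intro!: exI[of _ "0::int"])
      qed
    qed simp
    also have "measure (pair_pmf Q P) ({1} \<times> {f. \<bar>W f\<bar> < t}) = measure Q {1} * measure P {f. \<bar>W f\<bar> < t}"
      by (rule prod_meas[OF finP])
    also have "measure P {f. \<bar>W f\<bar> < t} = 1 - q8"
    proof -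
      have "{f. \<bar>W f\<bar> < t} = space (measure_pmf P) - {f. t \<le> \<bar>W f\<bar>}" by auto
      then show ?thesis unfolding q8_def by (simp only:) (subst measure_pmf.prob_compl, auto)
    qed
    finally show ?thesis using Q1 by simp
  qed
  have m2: "measure (x_pmf n c s) {x. x j = 1} = u"
  proof -
    have "measure (x_pmf n c s) {x. x j = 1} = measure (pair_pmf Q P) ({1} \<times> UNIV)"
    proof -
      have "g -` {x. x j = 1} = {1} \<times> UNIV" by (auto simp: gj)
      then show ?thesis unfolding Mdec by simp
    qed
    also have "\<dots> = measure Q {1} * measure P UNIV"
      by (rule prod_meas[OF finP])
    finally show ?thesis using Q1 by simp
  qed
  have m3: "measure (x_pmf n c s) {x. matvec r n A x \<in> E} \<le> 2*u + q8"
  proof -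
    have "measure (x_pmf n c s) {x. matvec r n A x \<in> E} =
          measure (pair_pmf Q P) {z. near (th j * real_of_int (fst z) + W (snd z))}"
      unfolding Mdec by (simp add: vimage_def nearX)
    also have "\<dots> \<le> measure (pair_pmf Q P) ({b. b \<noteq> 0} \<times> UNIV \<union> UNIV \<times> {f. t \<le> \<bar>W f\<bar>})"
    proof (rule measure_pmf.finite_measure_mono)
      show "{z. near (th j * real_of_int (fst z) + W (snd z))} \<subseteq> {b. b \<noteq> 0} \<times> UNIV \<union> UNIV \<times> {f. t \<le> \<bar>W f\<bar>}"
      proof
        fix z assume "z \<in> {z. near (th j * real_of_int (fst z) + W (snd z))}"
        then have nr: "near (th j * real_of_int (fst z) + W (snd z))" by simp
        show "z \<in> {b. b \<noteq> 0} \<times> UNIV \<union> UNIV \<times> {f. t \<le> \<bar>W f\<bar>}"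
        proof (cases "fst z = 0 \<and> \<bar>W (snd z)\<bar> < t")
          case True
          then have b0: "fst z = 0" and Wt: "\<bar>W (snd z)\<bar> < t" by auto
          from nr b0 obtain m :: int where m: "\<bar>W (snd z) - th j - real_of_int m\<bar> < t" unfolding near_def by auto
          show ?thesis
          proof (cases "m = 0")
            case True
            then show ?thesis using m Wt unfolding t_def by linarith
          next
            case False
            then have "1 \<le> \<bar>real_of_int m\<bar>" by linarith
            then show ?thesis using m Wt thle unfolding t_def by linarith
          qed
        next
          case False
          then show ?thesis by (cases z) auto
        qed
      qed
    qed simp
    also have "\<dots> \<le> measure (pair_pmf Q P) ({b. b \<noteq> 0} \<times> UNIV) + measure (pair_pmf Q P) (UNIV \<times> {f. t \<le> \<bar>W f\<bar>})"
      by (rule measure_Un_le) auto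
    also have "measure (pair_pmf Q P) ({b. b \<noteq> 0} \<times> UNIV) = measure Q {b. b \<noteq> 0} * measure P UNIV"
      by (rule prod_meas[OF finP])
    also have "measure (pair_pmf Q P) (UNIV \<times> {f. t \<le> \<bar>W f\<bar>}) = measure Q UNIV * q8"
      unfolding q8_def by (rule prod_meas[OF finP])
    finally show ?thesis using Qnz by simp
  qed
  have R: "measure (x_pmf n c s) {x. matvec r n A x \<in> E \<and> x j = 1} / 2
      - measure (x_pmf n c s) {x. x j = 1} * measure (x_pmf n c s) {x. matvec r n A x \<in> E}
      \<le> prob_space.mutual_information (measure_pmf (x_pmf n c s)) 2
          (count_space UNIV) (count_space UNIV) (\<lambda>x. matvec r n A x) (\<lambda>x. x j)"
    by (rule mi_lower[OF finM])
  have "u * (1 - q8) / 2 - u * (2*u + q8) \<le> measure (x_pmf n c s) {x. matvec r n A x \<in> E \<and> x j = 1} / 2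
      - measure (x_pmf n c s) {x. x j = 1} * measure (x_pmf n c s) {x. matvec r n A x \<in> E}"
  proof -
    have "u * measure (x_pmf n c s) {x. matvec r n A x \<in> E} \<le> u * (2*u + q8)"
      using m3 upos by (intro mult_left_mono) auto
    then show ?thesis using m1 unfolding m2 by linarith
  qed
  moreover have "u / 4 \<le> u * (1 - q8) / 2 - u * (2*u + q8)"
  proof -
    have "1/4 \<le> (1 - q8) / 2 - (2*u + q8)" using q8 ule c by (simp add: field_simps)
    then have "u * (1/4) \<le> u * ((1 - q8) / 2 - (2*u + q8))" using upos by (intro mult_left_mono) auto
    then show ?thesis by (simp add: algebra_simps)
  qed
  moreover have "c/4/s = u/4" unfolding u_def by simp
  ultimately show ?thesis using R by linarith
qed


theorem mainTheorem4:
  shows "\<exists>c0>0. \<forall>c. 0 < c \<and> c \<le> c0 \<longrightarrow>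
    (\<exists>K>0. \<forall>(r::nat) (n::nat) (A::nat \<Rightarrow> nat \<Rightarrow> int) (s::real) (y::nat \<Rightarrow> real) (j::nat).
       1 \<le> s \<longrightarrow> j < n \<longrightarrow>
       Frac (rowcomb r A y j) \<noteq> 0 \<longrightarrow>
       \<bar>Frac (rowcomb r A y j)\<bar>\<^sup>2 \<ge> (1/s) * (\<Sum>k<n. (Frac (rowcomb r A y k))\<^sup>2) \<longrightarrow>
       prob_space.mutual_information (measure_pmf (x_pmf n c s)) 2
          (count_space UNIV) (count_space UNIV) (\<lambda>x. matvec r n A x) (\<lambda>x. x j)
         \<ge> K / s)"
proof (rule exI[of _ "1/100::real"], rule conjI)
  show "(0::real) < 1/100" by simp
  show "\<forall>c. 0 < c \<and> c \<le> 1/100 \<longrightarrow>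
    (\<exists>K>0. \<forall>(r::nat) (n::nat) (A::nat \<Rightarrow> nat \<Rightarrow> int) (s::real) (y::nat \<Rightarrow> real) (j::nat).
       1 \<le> s \<longrightarrow> j < n \<longrightarrow>
       Frac (rowcomb r A y j) \<noteq> 0 \<longrightarrow>
       \<bar>Frac (rowcomb r A y j)\<bar>\<^sup>2 \<ge> (1/s) * (\<Sum>k<n. (Frac (rowcomb r A y k))\<^sup>2) \<longrightarrow>
       prob_space.mutual_information (measure_pmf (x_pmf n c s)) 2
          (count_space UNIV) (count_space UNIV) (\<lambda>x. matvec r n A x) (\<lambda>x. x j)
         \<ge> K / s)"
  proof (intro allI impI)
    fix c :: real assume c: "0 < c \<and> c \<le> 1/100"
    have "\<forall>(r::nat) (n::nat) (A::nat \<Rightarrow> nat \<Rightarrow> int) (s::real) (y::nat \<Rightarrow> real) (j::nat).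
       1 \<le> s \<longrightarrow> j < n \<longrightarrow>
       Frac (rowcomb r A y j) \<noteq> 0 \<longrightarrow>
       \<bar>Frac (rowcomb r A y j)\<bar>\<^sup>2 \<ge> (1/s) * (\<Sum>k<n. (Frac (rowcomb r A y k))\<^sup>2) \<longrightarrow>
       prob_space.mutual_information (measure_pmf (x_pmf n c s)) 2
          (count_space UNIV) (count_space UNIV) (\<lambda>x. matvec r n A x) (\<lambda>x. x j)
         \<ge> c/4 / s"
      using c by (intro allI impI key) auto
    then show "\<exists>K>0. \<forall>(r::nat) (n::nat) (A::nat \<Rightarrow> nat \<Rightarrow> int) (s::real) (y::nat \<Rightarrow> real) (j::nat).
       1 \<le> s \<longrightarrow> j < n \<longrightarrow>
       Frac (rowcomb r A y j) \<noteq> 0 \<longrightarrow>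
       \<bar>Frac (rowcomb r A y j)\<bar>\<^sup>2 \<ge> (1/s) * (\<Sum>k<n. (Frac (rowcomb r A y k))\<^sup>2) \<longrightarrow>
       prob_space.mutual_information (measure_pmf (x_pmf n c s)) 2
          (count_space UNIV) (count_space UNIV) (\<lambda>x. matvec r n A x) (\<lambda>x. x j)
         \<ge> K / s"
      using c by (intro exI[of _ "c/4"]) auto
  qed
qed

end
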